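(* Let $\beta\ge2$ and let $T\ge\beta$ be an even integer. For $b\in\{0,1\}$ let $\mathcal{L}^b$ be the LDS on $\mathbb{R}$ with dynamics $x_{t+1}=x_t-\frac\beta Tu_t+w_t^b$, initial state $x_1=1$, cost functions $c_t(x,u):=|x|+|u|$ if $t>T/2$ and $c_t(x,u):=0$ otherwise, perturbations $w_t^0:=0$ for all $t$, and $w_t^1:=-1$ if $t=T/2$, $w_t^1:=0$ otherwise. Let $\mathrm{Alg}$ be any randomized algorithm for online control and $b\in\{0,1\}$. Then the (random) trajectory $(x_t,u_t)_{t=1}^T$ produced by $\mathrm{Alg}$ in $\mathcal{L}^b$ satisfies, with probability $1$, $$\sum_{t=1}^Tc_t(x_t,u_t)=\sum_{t=T/2+1}^T(|x_t|+|u_t|)\ge\frac{T}{2\beta}|x_{T/2+1}|.$$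
   Context: Online control protocol: at each step $t$ the algorithm observes $x_t$, chooses $u_t\in\mathbb{R}$, then the cost $c_t(x_t,u_t)$ is incurred and the state evolves by the stated dynamics. *)

theory Defs
  imports "HOL-Probability.Probability"
begin

definition pert :: "nat \<Rightarrow> nat \<Rightarrow> nat \<Rightarrow> real" where
  "pert b T t = (if b = 1 \<and> t = T div 2 then -1 else 0)"

definition cost :: "nat \<Rightarrow> nat \<Rightarrow> real \<Rightarrow> real \<Rightarrow> real" where
  "cost T t x u = (if real t > real T / 2 then \<bar>x\<bar> + \<bar>u\<bar> else 0)"

text \<open>A (deterministic, for a fixed random seed) online control algorithm is
  A :: nat \<Rightarrow> real list \<Rightarrow> real : at time t it sees the observed states
  [x_1, ..., x_t] and outputs u_t.  hist beta T b A n = [x_1, ..., x_(n+1)]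
  for the dynamics x_(t+1) = x_t - (beta/T) u_t + w^b_t, x_1 = 1.\<close>
fun hist :: "real \<Rightarrow> nat \<Rightarrow> nat \<Rightarrow> (nat \<Rightarrow> real list \<Rightarrow> real) \<Rightarrow> nat \<Rightarrow> real list" where
  "hist \<beta> T b A 0 = [1]"
| "hist \<beta> T b A (Suc n) =
     (let h = hist \<beta> T b A n
      in h @ [last h - \<beta> / real T * A (Suc n) h + pert b T (Suc n)])"

definition state :: "real \<Rightarrow> nat \<Rightarrow> nat \<Rightarrow> (nat \<Rightarrow> real list \<Rightarrow> real) \<Rightarrow> nat \<Rightarrow> real" where
  "state \<beta> T b A t = hist \<beta> T b A (t - 1) ! (t - 1)"

definition ctrl :: "real \<Rightarrow> nat \<Rightarrow> nat \<Rightarrow> (nat \<Rightarrow> real list \<Rightarrow> real) \<Rightarrow> nat \<Rightarrow> real" where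
  "ctrl \<beta> T b A t = A t (hist \<beta> T b A (t - 1))"

end

theory Submission
  imports Defs
begin

lemma hist_len: "length (hist \<beta> T b A n) = Suc n"
  by (induction n) (auto simp: Let_def)

lemma state_rec:
  assumes "t \<ge> 1"
  shows "state \<beta> T b A (Suc t) = state \<beta> T b A t - \<beta> / real T * ctrl \<beta> T b A t + pert b T t"
proof -
  obtain n where t: "t = Suc n" using assms by (cases t) auto
  have l: "last (hist \<beta> T b A n) = hist \<beta> T b A n ! n"
    by (metis diff_Suc_1 hist_len last_conv_nth list.size(3) nat.distinct(1))
  show ?thesis unfolding state_def ctrl_def t
    by (simp add: Let_def nth_append hist_len l)
qed

lemma main_det:
  fixes \<beta> :: real and T :: nat and b :: nat and A
  assumes "\<beta> \<ge> 2" and "real T \<ge> \<beta>" and "even T"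
  shows "(\<Sum>t = 1..T. cost T t (state \<beta> T b A t) (ctrl \<beta> T b A t))
      = (\<Sum>t = T div 2 + 1..T. \<bar>state \<beta> T b A t\<bar> + \<bar>ctrl \<beta> T b A t\<bar>)
    \<and> (\<Sum>t = T div 2 + 1..T. \<bar>state \<beta> T b A t\<bar> + \<bar>ctrl \<beta> T b A t\<bar>)
      \<ge> real T / (2 * \<beta>) * \<bar>state \<beta> T b A (T div 2 + 1)\<bar>"
proof -
  define x where "x = state \<beta> T b A"
  define u where "u = ctrl \<beta> T b A"
  define m where "m = T div 2"
  have Tm: "T = 2 * m" using assms(3) m_def by auto
  have Tpos: "real T > 0" using assms by linarith
  have p1: "(\<Sum>t = 1..T. cost T t (x t) (u t)) = (\<Sum>t = m + 1..T. \<bar>x t\<bar> + \<bar>u t\<bar>)"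
  proof -
    have split: "{1..T} = {1..m} \<union> {m+1..T}" using Tm by auto
    have "(\<Sum>t = 1..T. cost T t (x t) (u t)) = (\<Sum>t = 1..m. cost T t (x t) (u t)) + (\<Sum>t = m+1..T. cost T t (x t) (u t))"
      unfolding split by (rule sum.union_disjoint) auto
    also have "(\<Sum>t = 1..m. cost T t (x t) (u t)) = 0"
      by (rule sum.neutral) (auto simp: cost_def Tm)
    also have "(\<Sum>t = m+1..T. cost T t (x t) (u t)) = (\<Sum>t = m + 1..T. \<bar>x t\<bar> + \<bar>u t\<bar>)"
      by (rule sum.cong) (auto simp: cost_def Tm)
    finally show ?thesis by simp
  qed
  define s where "s = \<bar>x (m+1)\<bar>"
  have ind: "m + 1 + j \<le> T \<Longrightarrow> \<bar>x (m+1+j)\<bar> \<ge> s - \<beta> / real T * (\<Sum>k = m+1..<m+1+j. \<bar>u k\<bar>)" for j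
  proof (induction j)
    case 0 then show ?case by (simp add: s_def)
  next
    case (Suc j)
    have pz: "pert b T (m+1+j) = 0" by (simp add: pert_def m_def)
    have rec: "x (Suc (m+1+j)) = x (m+1+j) - \<beta> / real T * u (m+1+j)"
      using state_rec[of "m+1+j" \<beta> T b A] pz unfolding x_def u_def by simp
    have c: "\<beta> / real T \<ge> 0" using assms Tpos by simp
    have "\<bar>x (Suc (m+1+j))\<bar> \<ge> \<bar>x (m+1+j)\<bar> - \<beta> / real T * \<bar>u (m+1+j)\<bar>"
    proof -
      have "\<bar>\<beta> / real T * u (m+1+j)\<bar> = \<beta> / real T * \<bar>u (m+1+j)\<bar>"
        using c assms(1) by (simp add: abs_mult)
      thus ?thesis unfolding rec
        using abs_triangle_ineq2[of "x (m+1+j)" "\<beta> / real T * u (m+1+j)"] by linarith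
    qed
    moreover have "\<bar>x (m+1+j)\<bar> \<ge> s - \<beta> / real T * (\<Sum>k = m+1..<m+1+j. \<bar>u k\<bar>)"
      using Suc by simp
    moreover have "(\<Sum>k = m+1..<m+1+Suc j. \<bar>u k\<bar>) = (\<Sum>k = m+1..<m+1+j. \<bar>u k\<bar>) + \<bar>u (m+1+j)\<bar>"
      by simp
    ultimately show ?case by (simp add: algebra_simps)
  qed
  define U where "U = (\<Sum>t = m + 1..T. \<bar>u t\<bar>)"
  define X where "X = (\<Sum>t = m + 1..T. \<bar>x t\<bar>)"
  have c: "\<beta> / real T \<ge> 0" using assms Tpos by simp
  have each: "\<bar>x t\<bar> \<ge> s - \<beta> / real T * U" if t: "t \<in> {m+1..T}" for t
  proof -
    obtain j where j: "t = m+1+j" using t by (metis atLeastAtMost_iff le_Suc_ex)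
    have "(\<Sum>k = m+1..<m+1+j. \<bar>u k\<bar>) \<le> U"
      unfolding U_def using t j by (intro sum_mono2) auto
    hence "\<beta> / real T * (\<Sum>k = m+1..<m+1+j. \<bar>u k\<bar>) \<le> \<beta> / real T * U"
      using c by (rule mult_left_mono)
    thus ?thesis using ind[of j] t j by auto
  qed
  have "X \<ge> (\<Sum>t = m + 1..T. s - \<beta> / real T * U)"
    unfolding X_def by (rule sum_mono) (use each in auto)
  hence Xb: "X \<ge> real m * (s - \<beta> / real T * U)" using Tm by simp
  have X0: "X \<ge> 0" unfolding X_def by (simp add: sum_nonneg)
  have U0: "U \<ge> 0" unfolding U_def by (simp add: sum_nonneg)
  have s0: "s \<ge> 0" by (simp add: s_def)
  have bp: "\<beta> > 0" using assms by simp
  have p2: "X + U \<ge> real T / (2 * \<beta>) * s"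
  proof (cases "\<beta> / real T * U \<ge> s / 2")
    case True
    hence "\<beta> * U \<ge> real T * s / 2" using Tpos by (simp add: field_simps)
    hence "U \<ge> real T / (2 * \<beta>) * s" using bp by (simp add: field_simps)
    then show ?thesis using X0 by simp
  next
    case False
    have "real m * (s / 2) \<le> real m * (s - \<beta> / real T * U)"
      using False by (intro mult_left_mono) auto
    hence "X \<ge> real m * (s / 2)" using Xb by linarith
    hence "X \<ge> real T * s / 4" using Tm by (simp add: mult.commute)
    moreover have "real T / (2 * \<beta>) * s \<le> real T * s / 4"
    proof -
      have "real T / (2 * \<beta>) \<le> real T / 4"
        using assms Tpos bp by (intro divide_left_mono) auto
      thus ?thesis using s0 by (metis mult_right_mono times_divide_eq_left)
    qed
    ultimately show ?thesis using U0 by linarith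
  qed
  have "(\<Sum>t = m + 1..T. \<bar>x t\<bar> + \<bar>u t\<bar>) = X + U"
    unfolding X_def U_def by (simp add: sum.distrib)
  with p1 p2 show ?thesis unfolding x_def u_def m_def s_def by simp
qed

theorem lemma11:
  fixes \<beta> :: real and T :: nat and b :: nat
    and M :: "'r measure" and Alg :: "'r \<Rightarrow> nat \<Rightarrow> real list \<Rightarrow> real"
  assumes "\<beta> \<ge> 2" and "real T \<ge> \<beta>" and "even T"
    and "b \<in> {0, 1}"
    and "prob_space M"
  shows "AE r in M.
    (\<Sum>t = 1..T. cost T t (state \<beta> T b (Alg r) t) (ctrl \<beta> T b (Alg r) t))
      = (\<Sum>t = T div 2 + 1..T. \<bar>state \<beta> T b (Alg r) t\<bar> + \<bar>ctrl \<beta> T b (Alg r) t\<bar>)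
    \<and> (\<Sum>t = T div 2 + 1..T. \<bar>state \<beta> T b (Alg r) t\<bar> + \<bar>ctrl \<beta> T b (Alg r) t\<bar>)
      \<ge> real T / (2 * \<beta>) * \<bar>state \<beta> T b (Alg r) (T div 2 + 1)\<bar>"
  by (rule always_eventually) (use main_det[OF assms(1-3)] in blast)

end
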